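(* (i) If $K\subset\mathbb{R}^{N+1}_+$ is compact and $\mu\in\mathcal{M}_K$, then $\mathbb{P}^h_\mu(A^{-1}z)=\mathbb{P}^{\tilde h}_{A_\#\mu}(z)$ for all $z\in\mathbb{R}^{N+1}_-$, where $A_\#\mu\in\mathcal{M}_{AK}$ is the pushforward $(A_\#\mu)(E)=\mu(A^{-1}E)$. If $K\subset\mathbb{R}^{N+1}_-$ is compact and $\mu\in\mathcal{M}_K$, then $\mathbb{P}^{\tilde h}_\mu(Az)=\mathbb{P}^h_{(A^{-1})_\#\mu}(z)$ for all $z\in\mathbb{R}^{N+1}_+$, where $((A^{-1})_\#\mu)(E)=\mu(AE)$. (ii) $\lambda\in\mathcal{M}_K$ is the $h$-capacitary measure of a compact $K\subset\mathbb{R}^{N+1}_+$ if and only if $A_\#\lambda$ is the $\tilde h$-capacitary measure of $AK$. (iii) For compact $K\subset\mathbb{R}^{N+1}_+$ with $h$-capacitary measure $\lambda$, $C_{\tilde h}(AK)=\lambda(K)=C_h(K)$; for compact $K\subset\mathbb{R}^{N+1}_-$ with $\tilde h$-capacitary measure $\tilde\lambda$, $C_h(A^{-1}K)=\tilde\lambda(K)=C_{\tilde h}(K)$.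
   Context: Fix $\gamma\in\mathbb{R}^N$, $N\ge1$. $F(x,t)=(4\pi t)^{-N/2}e^{-|x|^2/(4t)}$ for $t>0$, $0$ otherwise; $F(z-w)$ is evaluated with this formula at $z-w$. $h(x,t)=F(x-\gamma,t)$, $h_*(x,t)=(\pi/t)^{N/2}e^{|x-\gamma|^2/(4t)}$ on $\mathbb{R}^{N+1}_+$; $\tilde h(x,t)=e^{\langle x,\gamma\rangle+|\gamma|^2t}$, $\tilde h_*(y,\tau)=e^{-\langle y,\gamma\rangle-|\gamma|^2\tau}$ on $\mathbb{R}^{N+1}_-$. Appell map $A(x,t)=(\frac{x}{2t},-\frac{1}{4t})$, $A^{-1}(x,t)=(-\frac{x}{2t},-\frac{1}{4t})$. For compact $K$ (in $\mathbb{R}^{N+1}_+$ or $\mathbb{R}^{N+1}_-$), $\mathcal{M}_K$ is the set of nonnegative Radon measures supported in $K$. $\mathbb{P}^h_\mu(z)=\int\frac{F(z-w)}{h(z)h_*(w)}d\mu(w)$ ($z\in\mathbb{R}^{N+1}_+$), $\mathbb{P}^{\tilde h}_\mu(z)=\int\frac{F(z-w)}{\tilde h(z)\tilde h_*(w)}d\mu(w)$ ($z\in\mathbb{R}^{N+1}_-$). $C_h(K)=\max\{\mu(K):\mu\in\mathcal{M}_K,\mathbb{P}^h_\mu\le1\text{ on }\mathbb{R}^{N+1}_+\}$ and $C_{\tilde h}(K)=\max\{\mu(K):\mu\in\mathcal{M}_K,\mathbb{P}^{\tilde h}_\mu\le1\text{ on }\mathbb{R}^{N+1}_-\}$; an $h$-capacitary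 ($\tilde h$-capacitary) measure of $K$ is a measure attaining this maximum. *)

theory Defs
  imports "HOL-Analysis.Analysis" "HOL-Probability.Probability"
begin

text \<open>Points of R^(N+1) are pairs (x,t) with x in a Euclidean space of dimension N = DIM('a)
  and t real.\<close>

definition upper :: "('a::euclidean_space \<times> real) set" where
  "upper = {p. snd p > 0}"

definition lower :: "('a::euclidean_space \<times> real) set" where
  "lower = {p. snd p < 0}"

definition heatF :: "('a::euclidean_space \<times> real) \<Rightarrow> real" where
  "heatF p = (if snd p > 0
      then (4 * pi * snd p) powr (- real DIM('a) / 2) * exp (- (norm (fst p))\<^sup>2 / (4 * snd p))
      else 0)"

definition hfun :: "'a::euclidean_space \<Rightarrow> ('a \<times> real) \<Rightarrow> real" where
  "hfun \<gamma> p = heatF (fst p - \<gamma>, snd p)"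

definition hstar :: "'a::euclidean_space \<Rightarrow> ('a \<times> real) \<Rightarrow> real" where
  "hstar \<gamma> p = (pi / snd p) powr (real DIM('a) / 2) * exp ((norm (fst p - \<gamma>))\<^sup>2 / (4 * snd p))"

definition htil :: "'a::euclidean_space \<Rightarrow> ('a \<times> real) \<Rightarrow> real" where
  "htil \<gamma> p = exp (inner (fst p) \<gamma> + (norm \<gamma>)\<^sup>2 * snd p)"

definition htilstar :: "'a::euclidean_space \<Rightarrow> ('a \<times> real) \<Rightarrow> real" where
  "htilstar \<gamma> p = exp (- inner (fst p) \<gamma> - (norm \<gamma>)\<^sup>2 * snd p)"

definition appell :: "('a::euclidean_space \<times> real) \<Rightarrow> ('a \<times> real)" where
  "appell p = ((1 / (2 * snd p)) *\<^sub>R fst p, - 1 / (4 * snd p))"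

definition appell_inv :: "('a::euclidean_space \<times> real) \<Rightarrow> ('a \<times> real)" where
  "appell_inv p = ((- 1 / (2 * snd p)) *\<^sub>R fst p, - 1 / (4 * snd p))"

text \<open>M_K: nonnegative (finite, hence Radon) Borel measures supported in K.\<close>
definition meas_on :: "('a::euclidean_space \<times> real) set \<Rightarrow> ('a \<times> real) measure set" where
  "meas_on K = {\<mu>. sets \<mu> = sets borel \<and> emeasure \<mu> (UNIV - K) = 0 \<and> emeasure \<mu> K < \<infinity>}"

definition Ph :: "'a::euclidean_space \<Rightarrow> ('a \<times> real) measure \<Rightarrow> ('a \<times> real) \<Rightarrow> ennreal" where
  "Ph \<gamma> \<mu> z = (\<integral>\<^sup>+ w. ennreal (heatF (z - w) / (hfun \<gamma> z * hstar \<gamma> w)) \<partial>\<mu>)"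

definition Phtil :: "'a::euclidean_space \<Rightarrow> ('a \<times> real) measure \<Rightarrow> ('a \<times> real) \<Rightarrow> ennreal" where
  "Phtil \<gamma> \<mu> z = (\<integral>\<^sup>+ w. ennreal (heatF (z - w) / (htil \<gamma> z * htilstar \<gamma> w)) \<partial>\<mu>)"

definition adm_h :: "'a::euclidean_space \<Rightarrow> ('a \<times> real) set \<Rightarrow> ('a \<times> real) measure set" where
  "adm_h \<gamma> K = {\<mu> \<in> meas_on K. \<forall>z \<in> upper. Ph \<gamma> \<mu> z \<le> 1}"

definition adm_htil :: "'a::euclidean_space \<Rightarrow> ('a \<times> real) set \<Rightarrow> ('a \<times> real) measure set" where
  "adm_htil \<gamma> K = {\<mu> \<in> meas_on K. \<forall>z \<in> lower. Phtil \<gamma> \<mu> z \<le> 1}"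

definition cap_h :: "'a::euclidean_space \<Rightarrow> ('a \<times> real) set \<Rightarrow> ennreal" where
  "cap_h \<gamma> K = (SUP \<mu> \<in> adm_h \<gamma> K. emeasure \<mu> K)"

definition cap_htil :: "'a::euclidean_space \<Rightarrow> ('a \<times> real) set \<Rightarrow> ennreal" where
  "cap_htil \<gamma> K = (SUP \<mu> \<in> adm_htil \<gamma> K. emeasure \<mu> K)"

definition is_hcap :: "'a::euclidean_space \<Rightarrow> ('a \<times> real) set \<Rightarrow> ('a \<times> real) measure \<Rightarrow> bool" where
  "is_hcap \<gamma> K lam \<longleftrightarrow> lam \<in> adm_h \<gamma> K \<and> (\<forall>\<mu> \<in> adm_h \<gamma> K. emeasure \<mu> K \<le> emeasure lam K)"

definition is_htilcap :: "'a::euclidean_space \<Rightarrow> ('a \<times> real) set \<Rightarrow> ('a \<times> real) measure \<Rightarrow> bool" where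
  "is_htilcap \<gamma> K lam \<longleftrightarrow> lam \<in> adm_htil \<gamma> K \<and> (\<forall>\<mu> \<in> adm_htil \<gamma> K. emeasure \<mu> K \<le> emeasure lam K)"

end

theory Submission
  imports Defs
begin


lemma exp_real0:
  fixes X Y G XY XG YG t \<tau> D :: real
  assumes t: "t\<noteq>0" and tau: "\<tau>\<noteq>0" and d: "D \<noteq> 0" and dd: "D = 1 + 4*t*\<tau>"
  shows "- ((1/(4*t*t))*X + (1/t)*XY + Y) / (-D/t)
     - (- ((1/(4*t*t))*X + (1/t)*XG + G) / (-1/t))
     - (Y - 2*YG + G) / (4*\<tau>)
   = - (X - (1/\<tau>)*XY + (1/(4*\<tau>*\<tau>))*Y) / (D/\<tau>)
     - (XG + G * t)
     - (- (1/(2*\<tau>))*YG - G * (-1/(4*\<tau>)))"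
  using t tau d apply (simp add: field_simps) apply (simp add: dd algebra_simps) done

lemma div3:
  fixes P1 P2 P3 a b c :: real
  assumes "P2 \<noteq> 0" "P3 \<noteq> 0"
  shows "(P1 * exp a) / ((P2 * exp b) * (P3 * exp c)) = (P1 / (P2 * P3)) * exp (a - b - c)"
  using assms by (simp add: exp_diff)

lemma key:
  fixes \<gamma> x y :: "'a::euclidean_space" and t \<tau> :: real
  assumes t: "t<0" and tau: "\<tau>>0"
  shows "heatF (appell_inv (x,t) - (y,\<tau>)) / (hfun \<gamma> (appell_inv (x,t)) * hstar \<gamma> (y,\<tau>))
       = heatF ((x,t) - appell (y,\<tau>)) / (htil \<gamma> (x,t) * htilstar \<gamma> (appell (y,\<tau>)))"
proof -
  define s where "s = -1/(4*t)"
  define c where "c = -1/(2*t)"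
  define a where "a = 1/(2*\<tau>)"
  define b where "b = -1/(4*\<tau>)"
  define D where "D = 1 + 4*t*\<tau>"
  define r where "r = real DIM('a) / 2"
  have ai: "appell_inv (x,t) = (c *\<^sub>R x, s)" by (simp add: appell_inv_def c_def s_def)
  have ap: "appell (y,\<tau>) = (a *\<^sub>R y, b)" by (simp add: appell_def a_def b_def)
  have spos: "s > 0" using t by (simp add: s_def divide_neg_pos)
  have eqv: "s - \<tau> > 0 \<longleftrightarrow> t - b > 0"
    using t tau by (simp add: s_def b_def field_simps) linarith
  show ?thesis
  proof (cases "s - \<tau> > 0")
    case False
    then have "\<not> t - b > 0" using eqv by simp
    then show ?thesis using False by (simp add: ai ap heatF_def)
  next
    case True
    then have tb: "t - b > 0" using eqv by simp
    have Dnz: "D \<noteq> 0"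
    proof -
      have "t - b = D / (4*\<tau>)" using tau by (simp add: b_def D_def field_simps)
      then show ?thesis using tb tau by auto
    qed
    have e4s: "4 * (s - \<tau>) = -D/t" using t by (simp add: s_def D_def field_simps)
    have e4s2: "4 * s = -1/t" using t by (simp add: s_def)
    have e4b: "4 * (t - b) = D/\<tau>" using tau by (simp add: b_def D_def field_simps)
    have n1: "(norm (c *\<^sub>R x - y))\<^sup>2 = (1/(4*t*t))*inner x x + (1/t)*inner x y + inner y y"
      unfolding power2_norm_eq_inner
      by (simp add: c_def inner_diff_left inner_diff_right inner_commute algebra_simps)
    have n2: "(norm (c *\<^sub>R x - \<gamma>))\<^sup>2 = (1/(4*t*t))*inner x x + (1/t)*inner x \<gamma> + inner \<gamma> \<gamma>"
      unfolding power2_norm_eq_inner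
      by (simp add: c_def inner_diff_left inner_diff_right inner_commute algebra_simps)
    have n3: "(norm (y - \<gamma>))\<^sup>2 = inner y y - 2 * inner y \<gamma> + inner \<gamma> \<gamma>"
      by (simp add: power2_norm_eq_inner inner_diff_left inner_diff_right inner_commute)
    have n4: "(norm (x - a *\<^sub>R y))\<^sup>2 = inner x x - (1/\<tau>) * inner x y + (1/(4*\<tau>*\<tau>)) * inner y y"
      unfolding power2_norm_eq_inner
      by (simp add: a_def inner_diff_left inner_diff_right inner_commute algebra_simps)
    have n5: "inner (a *\<^sub>R y) \<gamma> = (1/(2*\<tau>)) * inner y \<gamma>" by (simp add: a_def)
    have n6: "(norm \<gamma>)\<^sup>2 = inner \<gamma> \<gamma>" by (simp add: power2_norm_eq_inner)
    have expeq: "- (norm (c *\<^sub>R x - y))\<^sup>2 / (4 * (s - \<tau>))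
       - (- (norm (c *\<^sub>R x - \<gamma>))\<^sup>2 / (4 * s)) - (norm (y - \<gamma>))\<^sup>2 / (4*\<tau>)
       = - (norm (x - a *\<^sub>R y))\<^sup>2 / (4 * (t - b)) - (inner x \<gamma> + (norm \<gamma>)\<^sup>2 * t)
         - (- inner (a *\<^sub>R y) \<gamma> - (norm \<gamma>)\<^sup>2 * b)"
      unfolding n1 n2 n3 n4 n5 n6 e4s e4s2 e4b
      using exp_real0[OF _ _ Dnz D_def, where X="inner x x" and XY="inner x y" and Y="inner y y"
         and XG="inner x \<gamma>" and G="inner \<gamma> \<gamma>" and YG="inner y \<gamma>"] t tau
      by (simp add: b_def)
    have pw: "(4*pi*(s-\<tau>)) powr (-r) / ((4*pi* s) powr (-r) * (pi/\<tau>) powr r)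
            = (4*pi*(t-b)) powr (-r)"
    proof -
      have "(pi/\<tau>) powr r = inverse ((pi/\<tau>) powr (-r))" by (simp add: powr_minus)
      then have "(4*pi*(s-\<tau>)) powr (-r) / ((4*pi* s) powr (-r) * (pi/\<tau>) powr r)
          = (4*pi*(s-\<tau>)) powr (-r) * (pi/\<tau>) powr (-r) / (4*pi* s) powr (-r)"
        by (simp add: field_simps)
      also have "\<dots> = ((4*pi*(s-\<tau>)) * (pi/\<tau>) / (4*pi* s)) powr (-r)"
        using True spos tau by (simp add: powr_mult powr_divide)
      also have "(4*pi*(s-\<tau>)) * (pi/\<tau>) / (4*pi* s) = 4*pi*(t-b)"
        using t tau spos by (simp add: s_def b_def field_simps)
      finally show ?thesis .
    qed
    have L: "heatF (appell_inv (x,t) - (y,\<tau>)) / (hfun \<gamma> (appell_inv (x,t)) * hstar \<gamma> (y,\<tau>))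
      = ((4*pi*(s-\<tau>)) powr (-r) / ((4*pi* s) powr (-r) * (pi/\<tau>) powr r)) *
        exp (- (norm (c *\<^sub>R x - y))\<^sup>2 / (4 * (s - \<tau>))
       - (- (norm (c *\<^sub>R x - \<gamma>))\<^sup>2 / (4 * s)) - (norm (y - \<gamma>))\<^sup>2 / (4*\<tau>))"
    proof -
      have "heatF (appell_inv (x,t) - (y,\<tau>)) / (hfun \<gamma> (appell_inv (x,t)) * hstar \<gamma> (y,\<tau>))
        = ((4*pi*(s-\<tau>)) powr (-r) * exp (- (norm (c *\<^sub>R x - y))\<^sup>2 / (4 * (s - \<tau>)))) /
          (((4*pi* s) powr (-r) * exp (- (norm (c *\<^sub>R x - \<gamma>))\<^sup>2 / (4 * s))) *
           ((pi/\<tau>) powr r * exp ((norm (y - \<gamma>))\<^sup>2 / (4*\<tau>))))"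
        using True spos tau by (simp add: ai heatF_def hfun_def hstar_def r_def)
      also have "\<dots> = ((4*pi*(s-\<tau>)) powr (-r) / ((4*pi* s) powr (-r) * (pi/\<tau>) powr r)) *
        exp (- (norm (c *\<^sub>R x - y))\<^sup>2 / (4 * (s - \<tau>))
       - (- (norm (c *\<^sub>R x - \<gamma>))\<^sup>2 / (4 * s)) - (norm (y - \<gamma>))\<^sup>2 / (4*\<tau>))"
        by (rule div3) (use spos tau in auto)
      finally show ?thesis .
    qed
    have R: "heatF ((x,t) - appell (y,\<tau>)) / (htil \<gamma> (x,t) * htilstar \<gamma> (appell (y,\<tau>)))
      = (4*pi*(t-b)) powr (-r) * exp (- (norm (x - a *\<^sub>R y))\<^sup>2 / (4 * (t - b)) - (inner x \<gamma> + (norm \<gamma>)\<^sup>2 * t)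
         - (- inner (a *\<^sub>R y) \<gamma> - (norm \<gamma>)\<^sup>2 * b))"
    proof -
      have "heatF ((x,t) - appell (y,\<tau>)) / (htil \<gamma> (x,t) * htilstar \<gamma> (appell (y,\<tau>)))
        = ((4*pi*(t-b)) powr (-r) * exp (- (norm (x - a *\<^sub>R y))\<^sup>2 / (4 * (t - b)))) /
          (exp (inner x \<gamma> + (norm \<gamma>)\<^sup>2 * t) * exp (- inner (a *\<^sub>R y) \<gamma> - (norm \<gamma>)\<^sup>2 * b))"
        using tb by (simp add: ap heatF_def htil_def htilstar_def r_def)
      also have "\<dots> = (4*pi*(t-b)) powr (-r) * exp (- (norm (x - a *\<^sub>R y))\<^sup>2 / (4 * (t - b)) - (inner x \<gamma> + (norm \<gamma>)\<^sup>2 * t)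
         - (- inner (a *\<^sub>R y) \<gamma> - (norm \<gamma>)\<^sup>2 * b))"
        by (simp only: exp_diff) simp
      finally show ?thesis .
    qed
    show ?thesis unfolding L R pw expeq ..
  qed
qed

lemma m1: "appell \<in> borel_measurable (borel :: ('a::euclidean_space \<times> real) measure)"
proof -
  have "appell \<in> (borel \<Otimes>\<^sub>M borel :: ('a \<times> real) measure) \<rightarrow>\<^sub>M (borel \<Otimes>\<^sub>M borel)"
    unfolding appell_def by measurable
  then show ?thesis by (simp add: borel_prod)
qed
lemma m2: "appell_inv \<in> borel_measurable (borel :: ('a::euclidean_space \<times> real) measure)"
proof -
  have "appell_inv \<in> (borel \<Otimes>\<^sub>M borel :: ('a \<times> real) measure) \<rightarrow>\<^sub>M (borel \<Otimes>\<^sub>M borel)"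
    unfolding appell_inv_def by measurable
  then show ?thesis by (simp add: borel_prod)
qed
lemma m3: "(\<lambda>v. ennreal (heatF (z - v) / (htil \<gamma> z * htilstar \<gamma> (v::'a::euclidean_space\<times>real)))) \<in> borel_measurable borel"
proof -
  have "(\<lambda>v. ennreal (heatF (z - v) / (htil \<gamma> z * htilstar \<gamma> (v::'a::euclidean_space\<times>real)))) \<in> borel_measurable (borel \<Otimes>\<^sub>M borel)"
    unfolding heatF_def htilstar_def fst_diff snd_diff by measurable
  then show ?thesis by (simp add: borel_prod)
qed
lemma m4: "(\<lambda>v. ennreal (heatF (z - v) / (hfun \<gamma> z * hstar \<gamma> (v::'a::euclidean_space\<times>real)))) \<in> borel_measurable borel"
proof -
  have "(\<lambda>v. ennreal (heatF (z - v) / (hfun \<gamma> z * hstar \<gamma> (v::'a::euclidean_space\<times>real)))) \<in> borel_measurable (borel \<Otimes>\<^sub>M borel)"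
    unfolding heatF_def hstar_def fst_diff snd_diff by measurable
  then show ?thesis by (simp add: borel_prod)
qed
lemma c1: "continuous_on upper (appell :: ('a::euclidean_space \<times> real) \<Rightarrow> _)"
  unfolding appell_def upper_def by (intro continuous_intros) auto
lemma c2: "continuous_on lower (appell_inv :: ('a::euclidean_space \<times> real) \<Rightarrow> _)"
  unfolding appell_inv_def lower_def by (intro continuous_intros) auto


lemma ai_a: "snd p \<noteq> 0 \<Longrightarrow> appell_inv (appell p) = p"
  by (cases p) (simp add: appell_def appell_inv_def field_simps)
lemma a_ai: "snd p \<noteq> 0 \<Longrightarrow> appell (appell_inv p) = p"
  by (cases p) (simp add: appell_def appell_inv_def field_simps)
lemma a_up: "p \<in> upper \<Longrightarrow> appell p \<in> lower"
  by (cases p) (simp add: appell_def upper_def lower_def divide_neg_pos)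
lemma a_low: "p \<in> lower \<Longrightarrow> appell p \<in> upper"
  by (cases p) (simp add: appell_def upper_def lower_def divide_neg_neg)
lemma ai_up: "p \<in> upper \<Longrightarrow> appell_inv p \<in> lower"
  by (cases p) (simp add: appell_inv_def upper_def lower_def divide_neg_pos)
lemma ai_low: "p \<in> lower \<Longrightarrow> appell_inv p \<in> upper"
  by (cases p) (simp add: appell_inv_def upper_def lower_def divide_neg_neg)

lemma key':
  fixes \<gamma> :: "'a::euclidean_space"
  assumes "z \<in> lower" "w \<in> upper"
  shows "heatF (appell_inv z - w) / (hfun \<gamma> (appell_inv z) * hstar \<gamma> w)
       = heatF (z - appell w) / (htil \<gamma> z * htilstar \<gamma> (appell w))"
  using assms key[where t="snd z" and \<tau>="snd w" and x="fst z" and y="fst w" and \<gamma>=\<gamma>]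
  by (cases z, cases w) (simp add: upper_def lower_def)

lemma key'':
  fixes \<gamma> :: "'a::euclidean_space"
  assumes "z \<in> upper" "w \<in> lower"
  shows "heatF (appell z - w) / (htil \<gamma> (appell z) * htilstar \<gamma> w)
       = heatF (z - appell_inv w) / (hfun \<gamma> z * hstar \<gamma> (appell_inv w))"
proof -
  have z0: "snd z \<noteq> 0" and w0: "snd w \<noteq> 0" using assms by (auto simp: upper_def lower_def)
  have "heatF (appell_inv (appell z) - appell_inv w) / (hfun \<gamma> (appell_inv (appell z)) * hstar \<gamma> (appell_inv w))
       = heatF (appell z - appell (appell_inv w)) / (htil \<gamma> (appell z) * htilstar \<gamma> (appell (appell_inv w)))"
    by (rule key') (rule a_up[OF assms(1)], rule ai_low[OF assms(2)])
  then show ?thesis using z0 w0 by (simp add: ai_a a_ai)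
qed

lemma transfer_gen:
  fixes K :: "('a::euclidean_space \<times> real) set" and f g :: "'a \<times> real \<Rightarrow> 'a \<times> real"
  assumes K: "compact K" and S: "K \<subseteq> S" and \<mu>: "\<mu> \<in> meas_on K"
    and cont: "continuous_on S f" and meas: "f \<in> borel_measurable borel"
  shows "distr \<mu> borel f \<in> meas_on (f ` K)" "emeasure (distr \<mu> borel f) (f ` K) = emeasure \<mu> K"
proof -
  have sets: "sets \<mu> = sets borel" and null: "emeasure \<mu> (UNIV - K) = 0" and fin: "emeasure \<mu> K < \<infinity>"
    using \<mu> by (auto simp: meas_on_def)
  have sp: "space \<mu> = UNIV" using sets_eq_imp_space_eq[OF sets] by simp
  have fm: "f \<in> measurable \<mu> borel" unfolding measurable_cong_sets[OF sets refl] by (rule meas)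
  have cK: "compact (f ` K)" by (rule compact_continuous_image[OF continuous_on_subset[OF cont S] K])
  then have bK: "f ` K \<in> sets borel" by (simp add: compact_imp_closed borel_closed)
  have bK0: "K \<in> sets \<mu>" using K sets by (simp add: compact_imp_closed borel_closed)
  have bK1: "UNIV - K \<in> sets \<mu>" using bK0 sp by (metis sets.compl_sets)
  have pre: "f -` (f ` K) \<in> sets \<mu>" using fm bK sp by (metis measurable_sets inf_top.right_neutral)
  have m1: "emeasure (distr \<mu> borel f) (UNIV - f ` K) = 0"
  proof -
    have "emeasure (distr \<mu> borel f) (UNIV - f ` K) = emeasure \<mu> (f -` (UNIV - f ` K) \<inter> space \<mu>)"
      using bK by (intro emeasure_distr[OF fm]) auto
    also have "\<dots> \<le> emeasure \<mu> (UNIV - K)"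
      using bK1 by (intro emeasure_mono) blast+
    finally show ?thesis using null by simp
  qed
  have m2: "emeasure (distr \<mu> borel f) (f ` K) = emeasure \<mu> K"
  proof -
    have "emeasure (distr \<mu> borel f) (f ` K) = emeasure \<mu> (f -` (f ` K))"
      using bK sp by (simp add: emeasure_distr[OF fm])
    also have "\<dots> = emeasure \<mu> K"
    proof (rule antisym)
      have "emeasure \<mu> (f -` (f ` K)) \<le> emeasure \<mu> (K \<union> (UNIV - K))"
        using bK0 bK1 by (intro emeasure_mono) (auto simp del: Un_Diff_cancel)
      also have "\<dots> \<le> emeasure \<mu> K + emeasure \<mu> (UNIV - K)"
        using bK0 bK1 by (rule emeasure_subadditive)
      finally show "emeasure \<mu> (f -` (f ` K)) \<le> emeasure \<mu> K" using null by simp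
      show "emeasure \<mu> K \<le> emeasure \<mu> (f -` (f ` K))"
        using pre by (intro emeasure_mono) auto
    qed
    finally show ?thesis .
  qed
  show "distr \<mu> borel f \<in> meas_on (f ` K)" using m1 m2 fin by (simp add: meas_on_def)
  show "emeasure (distr \<mu> borel f) (f ` K) = emeasure \<mu> K" by (rule m2)
qed

lemma AE_K:
  assumes "\<mu> \<in> meas_on K" "compact K"
  shows "AE w in \<mu>. w \<in> K"
proof -
  have sets: "sets \<mu> = sets borel" and null: "emeasure \<mu> (UNIV - K) = 0"
    using assms by (auto simp: meas_on_def)
  have "UNIV - K \<in> sets \<mu>" using assms(2) sets by (simp add: compact_imp_closed borel_closed)
  then show ?thesis using null by (intro AE_I[where N="UNIV - K"]) auto
qed

lemma Ph_up:
  fixes \<gamma> :: "'a::euclidean_space"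
  assumes K: "compact K" "K \<subseteq> upper" and \<mu>: "\<mu> \<in> meas_on K" and z: "z \<in> lower"
  shows "Ph \<gamma> \<mu> (appell_inv z) = Phtil \<gamma> (distr \<mu> borel appell) z"
proof -
  have sets: "sets \<mu> = sets borel" using \<mu> by (auto simp: meas_on_def)
  have fm: "appell \<in> measurable \<mu> borel" unfolding measurable_cong_sets[OF sets refl] by (rule m1)
  have "Ph \<gamma> \<mu> (appell_inv z) = (\<integral>\<^sup>+ w. ennreal (heatF (z - appell w) / (htil \<gamma> z * htilstar \<gamma> (appell w))) \<partial>\<mu>)"
    unfolding Ph_def
    by (rule nn_integral_cong_AE) 
         (rule AE_mp[OF AE_K[OF \<mu> K(1)]], intro AE_I2 impI, metis key'[OF z] K(2) subsetD)
  also have "\<dots> = Phtil \<gamma> (distr \<mu> borel appell) z"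
    unfolding Phtil_def by (rule nn_integral_distr[OF fm, symmetric]) (unfold measurable_cong_sets[OF sets_distr refl], rule m3)
  finally show ?thesis .
qed

lemma Ph_low:
  fixes \<gamma> :: "'a::euclidean_space"
  assumes K: "compact K" "K \<subseteq> lower" and \<mu>: "\<mu> \<in> meas_on K" and z: "z \<in> upper"
  shows "Phtil \<gamma> \<mu> (appell z) = Ph \<gamma> (distr \<mu> borel appell_inv) z"
proof -
  have sets: "sets \<mu> = sets borel" using \<mu> by (auto simp: meas_on_def)
  have fm: "appell_inv \<in> measurable \<mu> borel" unfolding measurable_cong_sets[OF sets refl] by (rule m2)
  have "Phtil \<gamma> \<mu> (appell z) = (\<integral>\<^sup>+ w. ennreal (heatF (z - appell_inv w) / (hfun \<gamma> z * hstar \<gamma> (appell_inv w))) \<partial>\<mu>)"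
    unfolding Phtil_def
    by (rule nn_integral_cong_AE) 
         (rule AE_mp[OF AE_K[OF \<mu> K(1)]], intro AE_I2 impI, metis key''[OF z] K(2) subsetD)
  also have "\<dots> = Ph \<gamma> (distr \<mu> borel appell_inv) z"
    unfolding Ph_def by (rule nn_integral_distr[OF fm, symmetric]) (unfold measurable_cong_sets[OF sets_distr refl], rule m4)
  finally show ?thesis .
qed



lemma img_up: "K \<subseteq> upper \<Longrightarrow> appell ` K \<subseteq> lower" using a_up by blast
lemma img_low: "K \<subseteq> lower \<Longrightarrow> appell_inv ` K \<subseteq> upper" using ai_low by blast
lemma inv_img_up: "K \<subseteq> upper \<Longrightarrow> appell_inv ` (appell ` K) = K"
proof -
  assume K: "K \<subseteq> upper"
  have "\<And>p. p \<in> K \<Longrightarrow> appell_inv (appell p) = p" using K by (intro ai_a) (auto simp: upper_def)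
  then show ?thesis by (simp add: image_image)
qed
lemma inv_img_low: "K \<subseteq> lower \<Longrightarrow> appell ` (appell_inv ` K) = K"
proof -
  assume K: "K \<subseteq> lower"
  have "\<And>p. p \<in> K \<Longrightarrow> appell (appell_inv p) = p" using K by (intro a_ai) (auto simp: lower_def)
  then show ?thesis by (simp add: image_image)
qed
lemma cmp_up: "compact K \<Longrightarrow> K \<subseteq> upper \<Longrightarrow> compact (appell ` K)"
  by (rule compact_continuous_image[OF continuous_on_subset[OF c1]])
lemma cmp_low: "compact K \<Longrightarrow> K \<subseteq> lower \<Longrightarrow> compact (appell_inv ` K)"
  by (rule compact_continuous_image[OF continuous_on_subset[OF c2]])

lemma tr_up:
  assumes "compact K" "K \<subseteq> upper" "\<mu> \<in> meas_on K"
  shows "distr \<mu> borel appell \<in> meas_on (appell ` K)" "emeasure (distr \<mu> borel appell) (appell ` K) = emeasure \<mu> K"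
  using transfer_gen[OF assms(1,2,3) c1 m1] by auto
lemma tr_low:
  assumes "compact K" "K \<subseteq> lower" "\<mu> \<in> meas_on K"
  shows "distr \<mu> borel appell_inv \<in> meas_on (appell_inv ` K)" "emeasure (distr \<mu> borel appell_inv) (appell_inv ` K) = emeasure \<mu> K"
  using transfer_gen[OF assms(1,2,3) c2 m2] by auto

lemma adm_up:
  fixes \<gamma> :: "'a::euclidean_space"
  assumes K: "compact K" "K \<subseteq> upper" and \<mu>: "\<mu> \<in> adm_h \<gamma> K"
  shows "distr \<mu> borel appell \<in> adm_htil \<gamma> (appell ` K)"
proof -
  have m: "\<mu> \<in> meas_on K" and le: "\<forall>z\<in>upper. Ph \<gamma> \<mu> z \<le> 1" using \<mu> by (auto simp: adm_h_def)
  have "\<forall>z\<in>lower. Phtil \<gamma> (distr \<mu> borel appell) z \<le> 1"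
    using Ph_up[OF K m] le ai_low by metis
  then show ?thesis using tr_up[OF K m] by (simp add: adm_htil_def)
qed

lemma adm_low:
  fixes \<gamma> :: "'a::euclidean_space"
  assumes K: "compact K" "K \<subseteq> lower" and \<mu>: "\<mu> \<in> adm_htil \<gamma> K"
  shows "distr \<mu> borel appell_inv \<in> adm_h \<gamma> (appell_inv ` K)"
proof -
  have m: "\<mu> \<in> meas_on K" and le: "\<forall>z\<in>lower. Phtil \<gamma> \<mu> z \<le> 1" using \<mu> by (auto simp: adm_htil_def)
  have "\<forall>z\<in>upper. Ph \<gamma> (distr \<mu> borel appell_inv) z \<le> 1"
    using Ph_low[OF K m] le a_up by metis
  then show ?thesis using tr_low[OF K m] by (simp add: adm_h_def)
qed

lemma adm_up_rev:
  fixes \<gamma> :: "'a::euclidean_space"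
  assumes K: "compact K" "K \<subseteq> upper" and m: "\<mu> \<in> meas_on K"
    and a: "distr \<mu> borel appell \<in> adm_htil \<gamma> (appell ` K)"
  shows "\<mu> \<in> adm_h \<gamma> K"
proof -
  have le: "\<forall>z\<in>lower. Phtil \<gamma> (distr \<mu> borel appell) z \<le> 1" using a by (auto simp: adm_htil_def)
  have "Ph \<gamma> \<mu> z \<le> 1" if z: "z \<in> upper" for z
  proof -
    have "snd z \<noteq> 0" using z by (auto simp: upper_def)
    then have "Ph \<gamma> \<mu> z = Ph \<gamma> \<mu> (appell_inv (appell z))" by (simp add: ai_a)
    also have "\<dots> = Phtil \<gamma> (distr \<mu> borel appell) (appell z)" using Ph_up[OF K m a_up[OF z]] .
    also have "\<dots> \<le> 1" using le a_up[OF z] by blast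
    finally show ?thesis .
  qed
  then show ?thesis using m by (simp add: adm_h_def)
qed

lemma cap_h_eq: "is_hcap \<gamma> K lam \<Longrightarrow> cap_h \<gamma> K = emeasure lam K"
  unfolding is_hcap_def cap_h_def by (auto intro!: antisym SUP_least SUP_upper)
lemma cap_htil_eq: "is_htilcap \<gamma> K lam \<Longrightarrow> cap_htil \<gamma> K = emeasure lam K"
  unfolding is_htilcap_def cap_htil_def by (auto intro!: antisym SUP_least SUP_upper)

lemma hcap_iff:
  fixes \<gamma> :: "'a::euclidean_space"
  assumes K: "compact K" "K \<subseteq> upper" and m: "lam \<in> meas_on K"
  shows "is_hcap \<gamma> K lam \<longleftrightarrow> is_htilcap \<gamma> (appell ` K) (distr lam borel appell)"
proof
  assume h: "is_hcap \<gamma> K lam"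
  have la: "lam \<in> adm_h \<gamma> K" and mx: "\<forall>\<mu>\<in>adm_h \<gamma> K. emeasure \<mu> K \<le> emeasure lam K"
    using h by (auto simp: is_hcap_def)
  have L: "compact (appell ` K)" "appell ` K \<subseteq> lower" using cmp_up[OF K] img_up[OF K(2)] by auto
  have "emeasure \<nu> (appell ` K) \<le> emeasure (distr lam borel appell) (appell ` K)"
    if \<nu>: "\<nu> \<in> adm_htil \<gamma> (appell ` K)" for \<nu>
  proof -
    have \<nu>m: "\<nu> \<in> meas_on (appell ` K)" using \<nu> by (simp add: adm_htil_def)
    have "distr \<nu> borel appell_inv \<in> adm_h \<gamma> K" using adm_low[OF L \<nu>] inv_img_up[OF K(2)] by simp
    then have "emeasure (distr \<nu> borel appell_inv) K \<le> emeasure lam K" using mx by blast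
    moreover have "emeasure (distr \<nu> borel appell_inv) K = emeasure \<nu> (appell ` K)"
      using tr_low(2)[OF L \<nu>m] inv_img_up[OF K(2)] by simp
    ultimately show ?thesis using tr_up(2)[OF K m] by simp
  qed
  then show "is_htilcap \<gamma> (appell ` K) (distr lam borel appell)"
    using adm_up[OF K la] by (simp add: is_htilcap_def)
next
  assume h: "is_htilcap \<gamma> (appell ` K) (distr lam borel appell)"
  have la: "distr lam borel appell \<in> adm_htil \<gamma> (appell ` K)"
    and mx: "\<forall>\<nu>\<in>adm_htil \<gamma> (appell ` K). emeasure \<nu> (appell ` K) \<le> emeasure (distr lam borel appell) (appell ` K)"
    using h by (auto simp: is_htilcap_def)
  have "emeasure \<mu> K \<le> emeasure lam K" if \<mu>: "\<mu> \<in> adm_h \<gamma> K" for \<mu>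
  proof -
    have \<mu>m: "\<mu> \<in> meas_on K" using \<mu> by (simp add: adm_h_def)
    have "emeasure (distr \<mu> borel appell) (appell ` K) \<le> emeasure (distr lam borel appell) (appell ` K)"
      using mx adm_up[OF K \<mu>] by blast
    then show ?thesis using tr_up(2)[OF K \<mu>m] tr_up(2)[OF K m] by simp
  qed
  then show "is_hcap \<gamma> K lam" using adm_up_rev[OF K m la] by (simp add: is_hcap_def)
qed

lemma part5:
  fixes \<gamma> :: "'a::euclidean_space"
  assumes K: "compact K" "K \<subseteq> lower" and h: "is_htilcap \<gamma> K lam"
  shows "is_hcap \<gamma> (appell_inv ` K) (distr lam borel appell_inv)"
    "emeasure (distr lam borel appell_inv) (appell_inv ` K) = emeasure lam K"
proof -
  have la: "lam \<in> adm_htil \<gamma> K" and mx: "\<forall>\<nu>\<in>adm_htil \<gamma> K. emeasure \<nu> K \<le> emeasure lam K"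
    using h by (auto simp: is_htilcap_def)
  have lm: "lam \<in> meas_on K" using la by (simp add: adm_htil_def)
  have K': "compact (appell_inv ` K)" "appell_inv ` K \<subseteq> upper" using cmp_low[OF K] img_low[OF K(2)] by auto
  show e: "emeasure (distr lam borel appell_inv) (appell_inv ` K) = emeasure lam K" using tr_low(2)[OF K lm] .
  have "emeasure \<mu> (appell_inv ` K) \<le> emeasure (distr lam borel appell_inv) (appell_inv ` K)"
    if \<mu>: "\<mu> \<in> adm_h \<gamma> (appell_inv ` K)" for \<mu>
  proof -
    have \<mu>m: "\<mu> \<in> meas_on (appell_inv ` K)" using \<mu> by (simp add: adm_h_def)
    have "distr \<mu> borel appell \<in> adm_htil \<gamma> K" using adm_up[OF K' \<mu>] inv_img_low[OF K(2)] by simp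
    then have "emeasure (distr \<mu> borel appell) K \<le> emeasure lam K" using mx by blast
    moreover have "emeasure (distr \<mu> borel appell) K = emeasure \<mu> (appell_inv ` K)"
      using tr_up(2)[OF K' \<mu>m] inv_img_low[OF K(2)] by simp
    ultimately show ?thesis using e by simp
  qed
  then show "is_hcap \<gamma> (appell_inv ` K) (distr lam borel appell_inv)"
    using adm_low[OF K la] by (simp add: is_hcap_def)
qed

theorem lemma4p2:
  fixes \<gamma> :: "'a::euclidean_space"
  shows
    "(\<forall>K \<mu>. compact K \<and> K \<subseteq> (upper :: ('a \<times> real) set) \<and> \<mu> \<in> meas_on K \<longrightarrow>
        distr \<mu> borel appell \<in> meas_on (appell ` K) \<and>
        (\<forall>z \<in> lower. Ph \<gamma> \<mu> (appell_inv z) = Phtil \<gamma> (distr \<mu> borel appell) z))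
   \<and> (\<forall>K \<mu>. compact K \<and> K \<subseteq> (lower :: ('a \<times> real) set) \<and> \<mu> \<in> meas_on K \<longrightarrow>
        distr \<mu> borel appell_inv \<in> meas_on (appell_inv ` K) \<and>
        (\<forall>z \<in> upper. Phtil \<gamma> \<mu> (appell z) = Ph \<gamma> (distr \<mu> borel appell_inv) z))
   \<and> (\<forall>K lam. compact K \<and> K \<subseteq> (upper :: ('a \<times> real) set) \<and> lam \<in> meas_on K \<longrightarrow>
        (is_hcap \<gamma> K lam \<longleftrightarrow> is_htilcap \<gamma> (appell ` K) (distr lam borel appell)))
   \<and> (\<forall>K lam. compact K \<and> K \<subseteq> (upper :: ('a \<times> real) set) \<and> is_hcap \<gamma> K lam \<longrightarrow>
        cap_htil \<gamma> (appell ` K) = emeasure lam K \<and> emeasure lam K = cap_h \<gamma> K)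
   \<and> (\<forall>K lam. compact K \<and> K \<subseteq> (lower :: ('a \<times> real) set) \<and> is_htilcap \<gamma> K lam \<longrightarrow>
        cap_h \<gamma> (appell_inv ` K) = emeasure lam K \<and> emeasure lam K = cap_htil \<gamma> K)"
proof (intro conjI allI impI; elim conjE)
  fix K :: "('a \<times> real) set" and \<mu> assume K: "compact K" "K \<subseteq> upper" and m: "\<mu> \<in> meas_on K"
  show "distr \<mu> borel appell \<in> meas_on (appell ` K)" by (rule tr_up(1)[OF K m])
  show "\<forall>z \<in> lower. Ph \<gamma> \<mu> (appell_inv z) = Phtil \<gamma> (distr \<mu> borel appell) z"
    using Ph_up[OF K m] by blast
next
  fix K :: "('a \<times> real) set" and \<mu> assume K: "compact K" "K \<subseteq> lower" and m: "\<mu> \<in> meas_on K"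
  show "distr \<mu> borel appell_inv \<in> meas_on (appell_inv ` K)" by (rule tr_low(1)[OF K m])
  show "\<forall>z \<in> upper. Phtil \<gamma> \<mu> (appell z) = Ph \<gamma> (distr \<mu> borel appell_inv) z"
    using Ph_low[OF K m] by blast
next
  fix K :: "('a \<times> real) set" and lam assume K: "compact K" "K \<subseteq> upper" and m: "lam \<in> meas_on K"
  show "is_hcap \<gamma> K lam \<longleftrightarrow> is_htilcap \<gamma> (appell ` K) (distr lam borel appell)"
    by (rule hcap_iff[OF K m])
next
  fix K :: "('a \<times> real) set" and lam assume K: "compact K" "K \<subseteq> upper" and h: "is_hcap \<gamma> K lam"
  have m: "lam \<in> meas_on K" using h by (simp add: is_hcap_def adm_h_def)
  have "is_htilcap \<gamma> (appell ` K) (distr lam borel appell)" using h hcap_iff[OF K m] by simp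
  then show "cap_htil \<gamma> (appell ` K) = emeasure lam K"
    using cap_htil_eq tr_up(2)[OF K m] by metis
  show "emeasure lam K = cap_h \<gamma> K" using cap_h_eq[OF h] by simp
next
  fix K :: "('a \<times> real) set" and lam assume K: "compact K" "K \<subseteq> lower" and h: "is_htilcap \<gamma> K lam"
  show "cap_h \<gamma> (appell_inv ` K) = emeasure lam K"
    using cap_h_eq[OF part5(1)[OF K h]] part5(2)[OF K h] by simp
  show "emeasure lam K = cap_htil \<gamma> K" using cap_htil_eq[OF h] by simp
qed

end
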